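(* The reflection length and codimension functions do not coincide (i.e. there exists $g$ with $\ell(g)\neq\operatorname{codim}(g)$) in the following groups: (a) $G(m,p,n)$ with $1<p<m$ and $n\ge 2$; (b) $G(m,m,n)$ with $m\ge 3$ and $n\ge 3$.
   Context: $G(m,1,n)$ is the group of $n\times n$ monomial matrices whose nonzero entries are $m$-th roots of unity, acting on $V=\mathbb{C}^n$; for $p\mid m$, $G(m,p,n)$ is the subgroup of elements whose nonzero entries multiply to an $(m/p)$-th root of unity. A reflection is an element of finite order fixing a hyperplane pointwise. $\ell(g)$ is the minimal number of reflections of the group whose product is $g$ ($\ell(1)=0$), and $\operatorname{codim}(g)=n-\dim\{v\in V:gv=v\}$. *)

theory Defs
  imports "Jordan_Normal_Form.Matrix_Kernel"
begin

definition monomial_mat :: "nat \<Rightarrow> complex mat \<Rightarrow> bool" where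
  "monomial_mat n A \<longleftrightarrow> A \<in> carrier_mat n n \<and>
     (\<forall>i<n. \<exists>!j. j < n \<and> A $$ (i,j) \<noteq> 0) \<and>
     (\<forall>j<n. \<exists>!i. i < n \<and> A $$ (i,j) \<noteq> 0)"

definition Gm1n :: "nat \<Rightarrow> nat \<Rightarrow> complex mat set" where
  "Gm1n m n = {A. monomial_mat n A \<and>
     (\<forall>i<n. \<forall>j<n. A $$ (i,j) \<noteq> 0 \<longrightarrow> A $$ (i,j) ^ m = 1)}"

definition nz_prod :: "nat \<Rightarrow> complex mat \<Rightarrow> complex" where
  "nz_prod n A = (\<Prod>ij\<in>{(i,j). i < n \<and> j < n \<and> A $$ (i,j) \<noteq> 0}. A $$ ij)"

definition Gmpn :: "nat \<Rightarrow> nat \<Rightarrow> nat \<Rightarrow> complex mat set" where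
  "Gmpn m p n = {A \<in> Gm1n m n. nz_prod n A ^ (m div p) = 1}"

definition fixed_space :: "nat \<Rightarrow> complex mat \<Rightarrow> complex vec set" where
  "fixed_space n g = {v \<in> carrier_vec n. g *\<^sub>v v = v}"

definition codim :: "nat \<Rightarrow> complex mat \<Rightarrow> nat" where
  "codim n g = n - kernel_dim (g - 1\<^sub>m n)"

text \<open>Reflection: non-identity element of finite order whose fixed space
  (= kernel of g - 1) contains a hyperplane, i.e. has dimension at least n - 1.\<close>
definition is_reflection :: "nat \<Rightarrow> complex mat \<Rightarrow> bool" where
  "is_reflection n g \<longleftrightarrow> g \<in> carrier_mat n n \<and> g \<noteq> 1\<^sub>m n \<and>
     (\<exists>k>0. g ^\<^sub>m k = 1\<^sub>m n) \<and> n - 1 \<le> kernel_dim (g - 1\<^sub>m n)"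

definition reflections :: "nat \<Rightarrow> complex mat set \<Rightarrow> complex mat set" where
  "reflections n G = {r \<in> G. is_reflection n r}"

definition refl_length :: "nat \<Rightarrow> complex mat set \<Rightarrow> complex mat \<Rightarrow> nat" where
  "refl_length n G g = (LEAST k. \<exists>rs. length rs = k \<and> set rs \<subseteq> reflections n G \<and>
      foldr (*) rs (1\<^sub>m n) = g)"

end

theory Submission
  imports Defs "Jordan_Normal_Form.DL_Rank_Submatrix"
begin


lemma prim_root:
  assumes "0 < (m::nat)"
  shows "\<exists>z::complex. z ^ m = 1 \<and> (\<forall>k. 0 < k \<longrightarrow> k < m \<longrightarrow> z ^ k \<noteq> 1)"
proof -
  let ?f = "\<lambda>k. cis (2 * pi * real k / real m)"
  have b: "bij_betw ?f {..<m} {z. z ^ m = 1}" by (rule bij_betw_roots_unity[OF assms])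
  have pw: "?f 1 ^ k = ?f k" for k by (simp add: DeMoivre mult_ac)
  show ?thesis
  proof (intro exI conjI allI impI)
    show "?f 1 ^ m = 1" using pw[of m] assms by simp
    fix k assume k: "0 < k" "k < m"
    have "?f k \<noteq> ?f 0"
    proof
      assume "?f k = ?f 0"
      with b k have "k = 0" unfolding bij_betw_def inj_on_def using assms by blast
      with k show False by simp
    qed
    then show "?f 1 ^ k \<noteq> 1" unfolding pw by simp
  qed
qed

lemma mult_entry_single:
  fixes A B :: "'a::comm_ring_1 mat"
  assumes A: "A \<in> carrier_mat n n" and B: "B \<in> carrier_mat n n"
    and x: "x < n" and y: "y < n" and s: "s < n"
    and z: "\<And>k. k < n \<Longrightarrow> k \<noteq> s \<Longrightarrow> A $$ (x,k) = 0"
  shows "(A * B) $$ (x,y) = A $$ (x,s) * B $$ (s,y)"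
proof -
  have "(A * B) $$ (x,y) = (\<Sum>k\<in>{0..<n}. A $$ (x,k) * B $$ (k,y))"
    using A B x y by (simp add: scalar_prod_def)
  also have "\<dots> = A $$ (x,s) * B $$ (s,y)"
  proof -
    have "(\<Sum>k\<in>{0..<n}. A $$ (x,k) * B $$ (k,y)) = A $$ (x,s) * B $$ (s,y) + (\<Sum>k\<in>{0..<n} - {s}. A $$ (x,k) * B $$ (k,y))"
      by (rule sum.remove) (use s in auto)
    also have "(\<Sum>k\<in>{0..<n} - {s}. A $$ (x,k) * B $$ (k,y)) = 0"
      by (rule sum.neutral) (use z in auto)
    finally show ?thesis by simp
  qed
  finally show ?thesis .
qed




definition dmat :: "nat \<Rightarrow> (nat \<Rightarrow> complex) \<Rightarrow> complex mat" where
  "dmat n f = mat n n (\<lambda>(i,j). if i = j then f i else 0)"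

definition tmat :: "nat \<Rightarrow> nat \<Rightarrow> nat \<Rightarrow> complex \<Rightarrow> complex mat" where
  "tmat n i j a = mat n n (\<lambda>(r,c). if r = i \<and> c = j then inverse a else if r = j \<and> c = i then a
      else if r = c \<and> r \<noteq> i \<and> r \<noteq> j then 1 else 0)"

lemma dmat_carrier[simp]: "dmat n f \<in> carrier_mat n n" unfolding dmat_def by simp
lemma tmat_carrier[simp]: "tmat n i j a \<in> carrier_mat n n" unfolding tmat_def by simp
lemma dmat_dims[simp]: "dim_row (dmat n f) = n" "dim_col (dmat n f) = n" unfolding dmat_def by simp_all
lemma tmat_dims[simp]: "dim_row (tmat n i j a) = n" "dim_col (tmat n i j a) = n" unfolding tmat_def by simp_all

lemma dmat_index[simp]: "x < n \<Longrightarrow> y < n \<Longrightarrow> dmat n f $$ (x,y) = (if x = y then f x else 0)"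
  unfolding dmat_def by simp

lemma tmat_index[simp]: "x < n \<Longrightarrow> y < n \<Longrightarrow> tmat n i j a $$ (x,y) =
  (if x = i \<and> y = j then inverse a else if x = j \<and> y = i then a
      else if x = y \<and> x \<noteq> i \<and> x \<noteq> j then 1 else 0)"
  unfolding tmat_def by simp

lemma dmat_mult: "dmat n f * dmat n g = dmat n (\<lambda>t. f t * g t)"
proof (rule eq_matI)
  fix x y assume xy: "x < dim_row (dmat n (\<lambda>t. f t * g t))" "y < dim_col (dmat n (\<lambda>t. f t * g t))"
  then have x: "x < n" and y: "y < n" by auto
  show "(dmat n f * dmat n g) $$ (x, y) = dmat n (\<lambda>t. f t * g t) $$ (x, y)"
    using mult_entry_single[of "dmat n f" n "dmat n g" x y x] x y by auto
qed auto

lemma dmat_one: "dmat n (\<lambda>_. 1) = 1\<^sub>m n"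
  by (rule eq_matI) auto

lemma dmat_pow: "dmat n f ^\<^sub>m k = dmat n (\<lambda>t. f t ^ k)"
proof (induction k)
  case 0 then show ?case using dmat_one[of n] by simp
next
  case (Suc k)
  then show ?case by (simp add: dmat_mult mult.commute)
qed

lemma tmat_mult:
  assumes i: "i < n" and j: "j < n" and ij: "i \<noteq> j"
  shows "tmat n i j a * tmat n i j c = dmat n (\<lambda>t. if t = i then c / a else if t = j then a / c else 1)"
proof (rule eq_matI)
  fix x y assume "x < dim_row (dmat n (\<lambda>t. if t = i then c / a else if t = j then a / c else 1))"
      "y < dim_col (dmat n (\<lambda>t. if t = i then c / a else if t = j then a / c else 1))"
  then have x: "x < n" and y: "y < n" by auto
  define s where "s = (if x = i then j else if x = j then i else x)"
  have s: "s < n" using i j x unfolding s_def by auto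
  have z: "tmat n i j a $$ (x,k) = 0" if k: "k < n" "k \<noteq> s" for k
    using k x ij unfolding s_def by (cases "x = i"; cases "x = j") auto
  have "(tmat n i j a * tmat n i j c) $$ (x,y) = tmat n i j a $$ (x,s) * tmat n i j c $$ (s,y)"
    by (rule mult_entry_single[OF tmat_carrier tmat_carrier x y s z])
  also have "\<dots> = dmat n (\<lambda>t. if t = i then c / a else if t = j then a / c else 1) $$ (x, y)"
    using x y s ij unfolding s_def by (cases "x = i"; cases "x = j"; cases "y = x") (auto simp: divide_inverse mult.commute)
  finally show "(tmat n i j a * tmat n i j c) $$ (x,y) = dmat n (\<lambda>t. if t = i then c / a else if t = j then a / c else 1) $$ (x, y)" .
qed auto

lemma mono_perm:
  fixes A :: "complex mat"
  assumes A: "A \<in> carrier_mat n n" and b: "bij_betw \<sigma> {..<n} {..<n}"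
    and nz: "\<And>i j. i < n \<Longrightarrow> j < n \<Longrightarrow> A $$ (i,j) \<noteq> 0 \<longleftrightarrow> j = \<sigma> i"
  shows "monomial_mat n A" "nz_prod n A = (\<Prod>i<n. A $$ (i, \<sigma> i))"
proof -
  have sl: "\<sigma> i < n" if "i < n" for i using b that unfolding bij_betw_def by auto
  show "monomial_mat n A" unfolding monomial_mat_def
  proof (intro conjI allI impI A)
    fix i assume i: "i < n"
    show "\<exists>!j. j < n \<and> A $$ (i, j) \<noteq> 0"
      using nz[OF i] sl[OF i] by auto
  next
    fix j assume j: "j < n"
    then obtain i where i: "i < n" "\<sigma> i = j" using b unfolding bij_betw_def by (metis imageE lessThan_iff)
    show "\<exists>!i. i < n \<and> A $$ (i, j) \<noteq> 0"
    proof (rule ex1I[of _ i])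
      show "i < n \<and> A $$ (i, j) \<noteq> 0" using nz[OF i(1) j] i by auto
      fix i' assume "i' < n \<and> A $$ (i', j) \<noteq> 0"
      then have "i' < n" "\<sigma> i' = \<sigma> i" using nz[OF _ j] i by auto
      then show "i' = i" using b i(1) unfolding bij_betw_def inj_on_def by auto
    qed
  qed
  have S: "{(i,j). i < n \<and> j < n \<and> A $$ (i,j) \<noteq> 0} = (\<lambda>i. (i, \<sigma> i)) ` {..<n}"
    using nz sl by auto
  have inj: "inj_on (\<lambda>i. (i, \<sigma> i)) {..<n}" by (auto simp: inj_on_def)
  show "nz_prod n A = (\<Prod>i<n. A $$ (i, \<sigma> i))"
    unfolding nz_prod_def S prod.reindex[OF inj] by (simp add: comp_def)
qed






lemma kernel_dim_rank:
  fixes A :: "'a::field mat"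
  assumes A: "A \<in> carrier_mat n n"
  shows "kernel_dim A + vec_space.rank n A = n"
proof -
  interpret V: vec_space "TYPE('a)" n .
  interpret K: kernel n n A by (unfold_locales, rule A)
  have hom: "(\<lambda>v. A *\<^sub>v v) \<in> LinearCombinations.module_hom class_ring V.V V.V"
    unfolding LinearCombinations.module_hom_def using A
    by (auto simp: mult_add_distrib_mat_vec mult_mat_vec)
  interpret L: linear_map class_ring V.V V.V "\<lambda>v. A *\<^sub>v v"
    by (unfold_locales, rule hom)
  have ker: "L.kerT = mat_kernel A"
    unfolding mod_hom.ker_def[OF L.mod_hom_axioms] mat_kernel_def using A by auto
  have im: "L.imT = V.span (set (cols A))"
    unfolding mod_hom.im_def[OF L.mod_hom_axioms] using V.col_space_eq[OF A] A
    unfolding V.col_space_def by auto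
  have "vectorspace.dim class_ring (V.V\<lparr>carrier := L.imT\<rparr>) + vectorspace.dim class_ring (V.V\<lparr>carrier := L.kerT\<rparr>) = V.dim"
    by (rule L.rank_nullity) simp
  then show ?thesis unfolding ker im V.dim_is_n V.rank_def kernel_dim_def using A by simp
qed



lemma pick_two:
  assumes "k < (l::nat)"
  shows "pick {k,l} 0 = k" "pick {k,l} 1 = l"
proof -
  show 0: "pick {k,l} 0 = k" unfolding pick.simps using assms by (intro Least_equality) auto
  have "pick {k,l} 1 = (LEAST a. a \<in> {k,l} \<and> a > pick {k,l} 0)"
    using pick.simps(2)[of "{k,l}" 0] by simp
  also have "\<dots> = l" unfolding 0 using assms by (intro Least_equality) auto
  finally show "pick {k,l} 1 = l" .
qed

lemma det_2x2:
  fixes A :: "'a::comm_ring_1 mat"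
  assumes A: "A \<in> carrier_mat 2 2"
  shows "det A = A $$ (0,0) * A $$ (1,1) - A $$ (0,1) * A $$ (1,0)"
proof -
  have U: "{0..<2::nat} = {0,1}" by auto
  have P: "{p. p permutes {0::nat,1}} = {id, Transposition.transpose 0 1}"
    by (simp add: permutes_doubleton_iff set_eq_iff)
  have ne: "id \<noteq> Transposition.transpose (0::nat) 1"
    by (metis id_apply transpose_apply_first zero_neq_one)
  have "det A = (\<Sum> p \<in> {id, Transposition.transpose 0 1}. signof p * (\<Prod> i \<in> {0,1}. A $$ (i, p i)))"
    unfolding det_def'[OF A] U P ..
  also have "\<dots> = signof (id::nat\<Rightarrow>nat) * (\<Prod> i \<in> {0::nat,1}. A $$ (i, id i)) + 
     signof (Transposition.transpose (0::nat) 1) * (\<Prod> i \<in> {0::nat,1}. A $$ (i, Transposition.transpose 0 1 i))"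
    using ne by simp
  also have "\<dots> = A $$ (0,0) * A $$ (1,1) - A $$ (0,1) * A $$ (1,0)"
    by (simp add: sign_swap_id)
  finally show ?thesis .
qed


lemma rank_ge2_minor:
  fixes A :: "'a::field mat"
  assumes A: "A \<in> carrier_mat n n" and kl: "k < l" "l < n" and ij: "i < j" "j < n"
    and ne: "A $$ (k,i) * A $$ (l,j) \<noteq> A $$ (k,j) * A $$ (l,i)"
  shows "2 \<le> vec_space.rank n A"
proof -
  interpret V: vec_space "TYPE('a)" n .
  have dA: "dim_row A = n" "dim_col A = n" using A by auto
  have c1: "{a. a < dim_row A \<and> a \<in> {k,l}} = {k,l}" "{a. a < dim_col A \<and> a \<in> {i,j}} = {i,j}" 
    unfolding dA using kl ij by auto
  have c2: "card {k,l} = 2" "card {i,j} = 2" using kl ij by auto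
  have S: "submatrix A {k,l} {i,j} \<in> carrier_mat 2 2"
  proof (rule carrier_matI)
    show "dim_row (submatrix A {k,l} {i,j}) = 2" unfolding dim_submatrix(1) c1(1) c2(1) ..
    show "dim_col (submatrix A {k,l} {i,j}) = 2" unfolding dim_submatrix(2) c1(2) c2(2) ..
  qed
  have e: "submatrix A {k,l} {i,j} $$ (a,b) = A $$ (pick {k,l} a, pick {i,j} b)" if "a < 2" "b < 2" for a b
    by (rule submatrix_index) (use that c1 c2 in simp_all)
  have "det (submatrix A {k,l} {i,j}) = A $$ (k,i) * A $$ (l,j) - A $$ (k,j) * A $$ (l,i)"
    unfolding det_2x2[OF S] using e[of 0 0] e[of 0 1] e[of 1 0] e[of 1 1]
    by (simp del: pick.simps add: pick_two[OF kl(1)] pick_two[OF ij(1)] pick_two[OF kl(1), unfolded One_nat_def] pick_two[OF ij(1), unfolded One_nat_def])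
  with ne have "det (submatrix A {k,l} {i,j}) \<noteq> 0" by simp
  from V.rank_gt_minor[OF A this] show ?thesis using c1 c2 dA by simp
qed


lemma rank_le1_minors:
  fixes A :: "'a::field mat"
  assumes A: "A \<in> carrier_mat n n" and r: "vec_space.rank n A \<le> 1"
    and k: "k < n" and l: "l < n" and i: "i < n" and j: "j < n"
  shows "A $$ (k,i) * A $$ (l,j) = A $$ (k,j) * A $$ (l,i)"
proof -
  have main: "A $$ (k,i) * A $$ (l,j) = A $$ (k,j) * A $$ (l,i)" if "k < l" "l < n" "i < j" "j < n" for k l i j
    using rank_ge2_minor[OF A that] r by force
  consider "k = l" | "i = j" | "k < l" "i < j" | "k < l" "j < i" | "l < k" "i < j" | "l < k" "j < i"
    by linarith
  then show ?thesis
  proof cases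
    case 4 then show ?thesis using main[of k l j i] k l i j by (simp add: mult.commute)
  next
    case 5 then show ?thesis using main[of l k i j] k l i j by (simp add: mult.commute)
  next
    case 6 then show ?thesis using main[of l k j i] k l i j by (simp add: mult.commute)
  qed (use main k l i j in \<open>auto simp: mult.commute\<close>)
qed

lemma refl_minors:
  assumes r: "is_reflection n g"
    and k: "k < n" and l: "l < n" and i: "i < n" and j: "j < n"
  shows "(g - 1\<^sub>m n) $$ (k,i) * (g - 1\<^sub>m n) $$ (l,j) = (g - 1\<^sub>m n) $$ (k,j) * (g - 1\<^sub>m n) $$ (l,i)"
proof -
  have g: "g \<in> carrier_mat n n" using r unfolding is_reflection_def by auto
  have C: "g - 1\<^sub>m n \<in> carrier_mat n n" using g by auto
  have "n - 1 \<le> kernel_dim (g - 1\<^sub>m n)" using r unfolding is_reflection_def by auto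
  then have "vec_space.rank n (g - 1\<^sub>m n) \<le> 1" using kernel_dim_rank[OF C] by linarith
  from rank_le1_minors[OF C this k l i j] show ?thesis .
qed

lemma kdim_ge_of_rank:
  fixes A :: "'a::field mat"
  assumes A: "A \<in> carrier_mat n n" and r: "vec_space.rank n A \<le> 1"
  shows "n - 1 \<le> kernel_dim A"
  using kernel_dim_rank[OF A] r by linarith

lemma tmat_refl:
  assumes i: "i < n" and j: "j < n" and ij: "i \<noteq> j" and a: "a \<noteq> 0"
  shows "is_reflection n (tmat n i j a)"
  unfolding is_reflection_def
proof (intro conjI)
  show "tmat n i j a \<in> carrier_mat n n" by simp
  show "tmat n i j a \<noteq> 1\<^sub>m n"
  proof
    assume "tmat n i j a = 1\<^sub>m n"
    then have "tmat n i j a $$ (i,i) = 1\<^sub>m n $$ (i,i)" by simp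
    then show False using i ij by simp
  qed
  have "tmat n i j a ^\<^sub>m 2 = tmat n i j a * tmat n i j a"
    by (simp add: numeral_2_eq_2)
  also have "\<dots> = 1\<^sub>m n"
  proof -
    have "(\<lambda>t. if t = i then a / a else if t = j then a / a else 1) = (\<lambda>_. 1::complex)"
      by (rule ext) (simp add: a)
    then show ?thesis unfolding tmat_mult[OF i j ij] using dmat_one[of n] by simp
  qed
  finally show "\<exists>k>0. tmat n i j a ^\<^sub>m k = 1\<^sub>m n" by (intro exI[of _ 2]) simp
  interpret V: vec_space "TYPE(complex)" n .
  define f where "f r = (if r = j then a else if r = i then -1 else (0::complex))" for r
  define h where "h c = (if c = i then 1 else if c = j then - inverse a else (0::complex))" for c
  have C: "tmat n i j a - 1\<^sub>m n \<in> carrier_mat n n" by (rule minus_carrier_mat) simp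
  have "V.rank (tmat n i j a - 1\<^sub>m n) \<le> 1"
  proof (rule V.rank_le_1_product_entries[OF C])
    fix r c assume "r < dim_row (tmat n i j a - 1\<^sub>m n)" "c < dim_col (tmat n i j a - 1\<^sub>m n)"
    then have rc: "r < n" "c < n" by auto
    show "(tmat n i j a - 1\<^sub>m n) $$ (r, c) = f r * h c"
      using rc ij a unfolding f_def h_def by (cases "r = i"; cases "r = j"; cases "c = i"; cases "c = j") auto
  qed
  then show "n - 1 \<le> kernel_dim (tmat n i j a - 1\<^sub>m n)" by (rule kdim_ge_of_rank[OF C])
qed

lemma dmat_refl:
  assumes s: "s < n" and d1: "d \<noteq> 1" and k: "0 < k" "d ^ k = 1"
  shows "is_reflection n (dmat n (\<lambda>t. if t = s then d else 1))"
  unfolding is_reflection_def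
proof (intro conjI)
  let ?D = "dmat n (\<lambda>t. if t = s then d else 1)"
  show "?D \<in> carrier_mat n n" by simp
  show "?D \<noteq> 1\<^sub>m n"
  proof
    assume "?D = 1\<^sub>m n"
    then have "?D $$ (s,s) = 1\<^sub>m n $$ (s,s)" by simp
    then show False using s d1 by simp
  qed
  have "(\<lambda>t. (if t = s then d else 1) ^ k) = (\<lambda>_. 1::complex)"
    by (rule ext) (simp add: k)
  then have "?D ^\<^sub>m k = 1\<^sub>m n" unfolding dmat_pow using dmat_one[of n] by simp
  then show "\<exists>k>0. ?D ^\<^sub>m k = 1\<^sub>m n" using k by blast
  interpret V: vec_space "TYPE(complex)" n .
  define f where "f r = (if r = s then d - 1 else (0::complex))" for r
  define h where "h c = (if c = s then 1 else (0::complex))" for c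
  have C: "?D - 1\<^sub>m n \<in> carrier_mat n n" by (rule minus_carrier_mat) simp
  have "V.rank (?D - 1\<^sub>m n) \<le> 1"
  proof (rule V.rank_le_1_product_entries[OF C])
    fix r c assume "r < dim_row (?D - 1\<^sub>m n)" "c < dim_col (?D - 1\<^sub>m n)"
    then have rc: "r < n" "c < n" by auto
    show "(?D - 1\<^sub>m n) $$ (r, c) = f r * h c"
      using rc unfolding f_def h_def by auto
  qed
  then show "n - 1 \<le> kernel_dim (?D - 1\<^sub>m n)" by (rule kdim_ge_of_rank[OF C])
qed




lemma prod_diag_list: "prod_list (map f [0..<n]) = (\<Prod>t<n. f t)"
  by (simp add: prod.distinct_set_conv_list[symmetric] atLeast0LessThan)

lemma prod_two:
  fixes f :: "nat \<Rightarrow> 'a::comm_monoid_mult"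
  assumes "i < n" "j < n" "i \<noteq> j" "\<And>t. t < n \<Longrightarrow> t \<noteq> i \<Longrightarrow> t \<noteq> j \<Longrightarrow> f t = 1"
  shows "(\<Prod>t<n. f t) = f i * f j"
proof -
  have "(\<Prod>t<n. f t) = (\<Prod>t\<in>{i,j}. f t)"
    by (rule prod.mono_neutral_right) (use assms in auto)
  then show ?thesis using assms by simp
qed

lemma prod_one:
  fixes f :: "nat \<Rightarrow> 'a::comm_monoid_mult"
  assumes "i < n" "\<And>t. t < n \<Longrightarrow> t \<noteq> i \<Longrightarrow> f t = 1"
  shows "(\<Prod>t<n. f t) = f i"
proof -
  have "(\<Prod>t<n. f t) = (\<Prod>t\<in>{i}. f t)"
    by (rule prod.mono_neutral_right) (use assms in auto)
  then show ?thesis by simp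
qed

context
  fixes m n :: nat and r :: "complex mat"
  assumes G: "r \<in> Gm1n m n" and R: "is_reflection n r"
begin

lemma rc: "r \<in> carrier_mat n n" using R unfolding is_reflection_def by auto

lemma row_u: assumes "i < n" "j < n" "r $$ (i,j) \<noteq> 0" "k < n" "k \<noteq> j" shows "r $$ (i,k) = 0"
proof (rule ccontr)
  assume a: "r $$ (i,k) \<noteq> 0"
  have "\<exists>!j. j < n \<and> r $$ (i,j) \<noteq> 0" using G assms(1) unfolding Gm1n_def monomial_mat_def by auto
  then show False using a assms by auto
qed

lemma col_u: assumes "i < n" "j < n" "r $$ (i,j) \<noteq> 0" "k < n" "k \<noteq> i" shows "r $$ (k,j) = 0"
proof (rule ccontr)
  assume a: "r $$ (k,j) \<noteq> 0"
  have "\<exists>!i. i < n \<and> r $$ (i,j) \<noteq> 0" using G assms(2) unfolding Gm1n_def monomial_mat_def by auto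
  then show False using a assms by auto
qed

lemma row_ex: assumes "i < n" shows "\<exists>j<n. r $$ (i,j) \<noteq> 0"
proof -
  have "\<exists>!j. j < n \<and> r $$ (i,j) \<noteq> 0" using G assms unfolding Gm1n_def monomial_mat_def by auto
  then show ?thesis by auto
qed

lemma rminor:
  assumes "k < n" "l < n" "i < n" "j < n"
  shows "(r $$ (k,i) - (if k = i then 1 else 0)) * (r $$ (l,j) - (if l = j then 1 else 0))
       = (r $$ (k,j) - (if k = j then 1 else 0)) * (r $$ (l,i) - (if l = i then 1 else 0))"
  using refl_minors[OF R assms] assms rc by simp

lemma offdiag:
  assumes i: "i < n" and j: "j < n" and ij: "i \<noteq> j" and nz: "r $$ (i,j) \<noteq> 0"
  shows "r $$ (i,i) = 0" "r $$ (j,j) = 0" "r $$ (i,j) * r $$ (j,i) = 1"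
    "\<And>t. t < n \<Longrightarrow> t \<noteq> i \<Longrightarrow> t \<noteq> j \<Longrightarrow> r $$ (t,t) = 1"
proof -
  show ii: "r $$ (i,i) = 0" using row_u[OF i j nz i] ij by simp
  show jj: "r $$ (j,j) = 0" using col_u[OF i j nz j] ij by simp
  show "r $$ (i,j) * r $$ (j,i) = 1" using rminor[OF i j i j] ii jj ij by simp
  fix t assume t: "t < n" "t \<noteq> i" "t \<noteq> j"
  have "r $$ (i,t) = 0" using row_u[OF i j nz t(1)] t by simp
  then show "r $$ (t,t) = 1" using rminor[OF t(1) i t(1) i] ii t by simp
qed

lemma offdiag2:
  assumes i: "i < n" and j: "j < n" and ij: "i \<noteq> j" and nz: "r $$ (i,j) \<noteq> 0"
    and a: "a < n" and b: "b < n" and ab: "a \<noteq> b" and nzab: "r $$ (a,b) \<noteq> 0"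
  shows "(a = i \<and> b = j) \<or> (a = j \<and> b = i)"
proof -
  have "a = i \<or> a = j" using offdiag(4)[OF i j ij nz a] offdiag(1)[OF a b ab nzab] by auto
  moreover have "b = i \<or> b = j" using offdiag(4)[OF i j ij nz b] offdiag(2)[OF a b ab nzab] by auto
  ultimately show ?thesis using ab ij by auto
qed

lemma diagcase:
  assumes D: "\<And>a b. a < n \<Longrightarrow> b < n \<Longrightarrow> a \<noteq> b \<Longrightarrow> r $$ (a,b) = 0"
    and i: "i < n" and j: "j < n" and ij: "i \<noteq> j"
  shows "r $$ (i,i) = 1 \<or> r $$ (j,j) = 1"
  using rminor[OF i j i j] D[OF i j ij] D[OF j i] ij by simp

lemma diag_nz:
  assumes D: "\<And>a b. a < n \<Longrightarrow> b < n \<Longrightarrow> a \<noteq> b \<Longrightarrow> r $$ (a,b) = 0" and s: "s < n"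
  shows "r $$ (s,s) \<noteq> 0"
  using row_ex[OF s] D[OF s] by metis

lemma diag_nzprod:
  assumes D: "\<And>a b. a < n \<Longrightarrow> b < n \<Longrightarrow> a \<noteq> b \<Longrightarrow> r $$ (a,b) = 0" and s: "s < n"
  shows "nz_prod n r = r $$ (s,s) \<or> r $$ (s,s) = 1"
proof (cases "r $$ (s,s) = 1")
  case False
  have b: "bij_betw id {..<n} {..<n}" by simp
  have "nz_prod n r = (\<Prod>t<n. r $$ (t, id t))"
    by (rule mono_perm(2)[OF rc b]) (use D diag_nz in auto)
  also have "\<dots> = (\<Prod>t<n. r $$ (t, t))" by simp
  also have "\<dots> = r $$ (s,s)"
    by (rule prod_one[OF s]) (use diagcase[OF D] s False in auto)
  finally show ?thesis by simp
qed simp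

end




lemma Gmpn_D: "r \<in> Gmpn m p n \<Longrightarrow> r \<in> Gm1n m n" "r \<in> Gmpn m p n \<Longrightarrow> nz_prod n r ^ (m div p) = 1"
  unfolding Gmpn_def by auto

lemma no2_a:
  assumes G1: "r1 \<in> Gmpn m p n" and R1: "is_reflection n r1"
    and G2: "r2 \<in> Gmpn m p n" and R2: "is_reflection n r2" and n: "2 \<le> n"
    and H1: "\<And>t. t < n \<Longrightarrow> (r1 * r2) $$ (t,t) \<noteq> 0"
    and H2: "\<And>t. t < n \<Longrightarrow> 2 \<le> t \<Longrightarrow> (r1 * r2) $$ (t,t) = 1"
    and H3: "(r1 * r2) $$ (0,0) \<noteq> 1" "(r1 * r2) $$ (1,1) \<noteq> 1" "(r1 * r2) $$ (0,0) * (r1 * r2) $$ (1,1) \<noteq> 1"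
    and H4: "((r1 * r2) $$ (0,0)) ^ (m div p) \<noteq> 1"
  shows False
proof -
  note g1 = Gmpn_D(1)[OF G1] and g2 = Gmpn_D(1)[OF G2]
  have c1: "r1 \<in> carrier_mat n n" by (rule rc[OF g1 R1])
  have c2: "r2 \<in> carrier_mat n n" by (rule rc[OF g2 R2])
  show False
  proof (cases "\<exists>i j. i < n \<and> j < n \<and> i \<noteq> j \<and> r1 $$ (i,j) \<noteq> 0")
    case True
    then obtain i j where i: "i < n" and j: "j < n" and ij: "i \<noteq> j" and nz: "r1 $$ (i,j) \<noteq> 0" by blast
    note o1 = offdiag[OF g1 R1 i j ij nz]
    have e_ii: "(r1 * r2) $$ (i,i) = r1 $$ (i,j) * r2 $$ (j,i)"
      by (rule mult_entry_single[OF c1 c2 i i j]) (rule row_u[OF g1 R1 i j nz], auto)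
    then have nz2: "r2 $$ (j,i) \<noteq> 0" using H1[OF i] by auto
    have ji: "j \<noteq> i" using ij by simp
    note o2 = offdiag[OF g2 R2 j i ji nz2]
    have nz1': "r1 $$ (j,i) \<noteq> 0" using o1(3) by auto
    have e_jj: "(r1 * r2) $$ (j,j) = r1 $$ (j,i) * r2 $$ (i,j)"
      by (rule mult_entry_single[OF c1 c2 j j i]) (rule row_u[OF g1 R1 j i nz1'], auto)
    have prod1: "(r1 * r2) $$ (i,i) * (r1 * r2) $$ (j,j) = 1"
      unfolding e_ii e_jj using o1(3) o2(3) by (simp add: algebra_simps)
    have other: "(r1 * r2) $$ (t,t) = 1" if t: "t < n" "t \<noteq> i" "t \<noteq> j" for t
    proof -
      have r1t: "r1 $$ (t,t) = 1" using o1(4)[OF t] .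
      have "(r1 * r2) $$ (t,t) = r1 $$ (t,t) * r2 $$ (t,t)"
        by (rule mult_entry_single[OF c1 c2 t(1) t(1) t(1)]) (rule row_u[OF g1 R1 t(1) t(1)], use r1t in auto)
      also have "\<dots> = 1" using r1t o2(4)[of t] t by auto
      finally show ?thesis .
    qed
    have n0: "0 < n" "1 < n" using n by auto
    have "0 = i \<or> 0 = j" using other[OF n0(1)] H3(1) by auto
    moreover have "1 = i \<or> 1 = j" using other[OF n0(2)] H3(2) by auto
    ultimately have "(i = 0 \<and> j = 1) \<or> (i = 1 \<and> j = 0)" using ij by auto
    then show False using prod1 H3(3) by (auto simp: mult.commute)
  next
    case False
    then have D1: "\<And>a b. a < n \<Longrightarrow> b < n \<Longrightarrow> a \<noteq> b \<Longrightarrow> r1 $$ (a,b) = 0" by blast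
    show False
    proof (cases "\<exists>i j. i < n \<and> j < n \<and> i \<noteq> j \<and> r2 $$ (i,j) \<noteq> 0")
      case True
      then obtain i j where i: "i < n" and j: "j < n" and ij: "i \<noteq> j" and nz: "r2 $$ (i,j) \<noteq> 0" by blast
      have "(r1 * r2) $$ (i,i) = r1 $$ (i,i) * r2 $$ (i,i)"
        by (rule mult_entry_single[OF c1 c2 i i i]) (use D1 i in auto)
      also have "r2 $$ (i,i) = 0" by (rule offdiag(1)[OF g2 R2 i j ij nz])
      finally show False using H1[OF i] by simp
    next
      case False
      then have D2: "\<And>a b. a < n \<Longrightarrow> b < n \<Longrightarrow> a \<noteq> b \<Longrightarrow> r2 $$ (a,b) = 0" by blast
      have n0: "0 < n" using n by auto
      have "(r1 * r2) $$ (0,0) = r1 $$ (0,0) * r2 $$ (0,0)"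
        by (rule mult_entry_single[OF c1 c2 n0 n0 n0]) (use D1 n0 in auto)
      moreover have "r1 $$ (0,0) ^ (m div p) = 1"
        using diag_nzprod[OF g1 R1 D1 n0] Gmpn_D(2)[OF G1] by auto
      moreover have "r2 $$ (0,0) ^ (m div p) = 1"
        using diag_nzprod[OF g2 R2 D2 n0] Gmpn_D(2)[OF G2] by auto
      ultimately show False using H4 by (simp add: power_mult_distrib)
    qed
  qed
qed

lemma refl_det_mm:
  assumes G: "r \<in> Gmpn m m n" and R: "is_reflection n r" and m: "0 < m"
  shows "det r = -1"
proof -
  note g = Gmpn_D(1)[OF G]
  have c: "r \<in> carrier_mat n n" by (rule rc[OF g R])
  have np: "nz_prod n r = 1" using Gmpn_D(2)[OF G] m by simp
  show ?thesis
  proof (cases "\<exists>i j. i < n \<and> j < n \<and> i \<noteq> j \<and> r $$ (i,j) \<noteq> 0")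
    case False
    then have D: "\<And>a b. a < n \<Longrightarrow> b < n \<Longrightarrow> a \<noteq> b \<Longrightarrow> r $$ (a,b) = 0" by blast
    have "r = 1\<^sub>m n"
    proof (rule eq_matI)
      fix x y assume "x < dim_row (1\<^sub>m n)" "y < dim_col (1\<^sub>m n)"
      then have x: "x < n" and y: "y < n" by auto
      show "r $$ (x,y) = 1\<^sub>m n $$ (x,y)"
      proof (cases "x = y")
        case True
        then show ?thesis using diag_nzprod[OF g R D x] np x by auto
      qed (use D x y in auto)
    qed (use c in auto)
    then show ?thesis using R unfolding is_reflection_def by auto
  next
    case True
    then obtain i j where i: "i < n" and j: "j < n" and ij: "i \<noteq> j" and nz: "r $$ (i,j) \<noteq> 0" by blast
    note o = offdiag[OF g R i j ij nz]
    note o2 = offdiag2[OF g R i j ij nz]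
    define B where "B = swaprows i j r"
    have Bc: "B \<in> carrier_mat n n" unfolding B_def using c by auto
    have Bi: "B $$ (x,y) = (if i = x then r $$ (j,y) else if j = x then r $$ (i,y) else r $$ (x,y))"
      if "x < n" "y < n" for x y unfolding B_def using that c by auto
    have ut: "upper_triangular B"
      unfolding upper_triangular_def
    proof (intro allI impI)
      fix x y assume x: "x < dim_row B" and yx: "y < x"
      then have x: "x < n" and y: "y < n" and xy: "x \<noteq> y" using Bc by auto
      show "B $$ (x,y) = 0"
      proof (cases "x = i")
        case True
        then show ?thesis using Bi[OF x y] o(2) o2[OF j y] xy ij by (cases "y = j") auto
      next
        case xi: False
        show ?thesis
        proof (cases "x = j")
          case True
          then show ?thesis using Bi[OF x y] o(1) o2[OF i y] xy ij xi by (cases "y = i") auto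
        next
          case False
          then show ?thesis using Bi[OF x y] o2[OF x y xy] xi by auto
        qed
      qed
    qed
    have "det B = prod_list (diag_mat B)" by (rule det_upper_triangular[OF ut Bc])
    also have "\<dots> = (\<Prod>t<n. B $$ (t,t))" unfolding diag_mat_def using Bc by (simp add: prod_diag_list)
    also have "\<dots> = B $$ (i,i) * B $$ (j,j)"
      by (rule prod_two[OF i j ij]) (use Bi o(4) in auto)
    also have "\<dots> = 1" using Bi[OF i i] Bi[OF j j] o(3) ij by (simp add: mult.commute)
    finally have "det B = 1" .
    moreover have "det B = - det r" unfolding B_def by (rule det_swaprows[OF i j ij c])
    ultimately have "- det r = 1" by simp
    then show ?thesis by (metis minus_minus)
  qed
qed




lemma codim_rank: "g \<in> carrier_mat n n \<Longrightarrow> codim n g = vec_space.rank n (g - 1\<^sub>m n)"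
  unfolding codim_def using kernel_dim_rank[of "g - 1\<^sub>m n" n] by (simp add: minus_carrier_mat)

lemma dmat_minus_one: "dmat n f - 1\<^sub>m n = dmat n (\<lambda>t. f t - 1)"
  by (rule eq_matI) auto

lemma dmat_add: "dmat n f + dmat n h = dmat n (\<lambda>t. f t + h t)"
  by (rule eq_matI) auto

lemma rank_dmat_single: "vec_space.rank n (dmat n (\<lambda>t. if t = k then c else 0)) \<le> 1"
proof -
  interpret V: vec_space "TYPE(complex)" n .
  show ?thesis
  proof (rule V.rank_le_1_product_entries[OF dmat_carrier])
    fix r s assume "r < dim_row (dmat n (\<lambda>t. if t = k then c else 0))" "s < dim_col (dmat n (\<lambda>t. if t = k then c else 0))"
    then have "r < n" "s < n" by auto
    then show "dmat n (\<lambda>t. if t = k then c else 0) $$ (r, s) = (if r = k then c else 0) * (if s = k then 1 else 0)"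
      by auto
  qed
qed

lemma dmat_ga_codim:
  assumes n: "2 \<le> n" and h: "\<And>t. 2 \<le> t \<Longrightarrow> f t = 1" and a: "f 0 \<noteq> 1" "f 1 \<noteq> 1"
  shows "codim n (dmat n f) = 2"
proof -
  interpret V: vec_space "TYPE(complex)" n .
  have e: "dmat n f - 1\<^sub>m n = dmat n (\<lambda>t. if t = 0 then f 0 - 1 else 0) + dmat n (\<lambda>t. if t = 1 then f 1 - 1 else 0)"
    unfolding dmat_minus_one dmat_add
  proof (rule arg_cong[where f = "dmat n"], rule ext)
    fix t show "f t - 1 = (if t = 0 then f 0 - 1 else 0) + (if t = 1 then f 1 - 1 else 0)"
      using h[of t] by (cases "t = 0"; cases "t = 1") auto
  qed
  have "V.rank (dmat n f - 1\<^sub>m n) \<le> V.rank (dmat n (\<lambda>t. if t = 0 then f 0 - 1 else 0)) + V.rank (dmat n (\<lambda>t. if t = 1 then f 1 - 1 else 0))"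
    unfolding e by (rule V.rank_subadditive[where nc = n]) (auto intro: add_carrier_mat)
  also have "\<dots> \<le> 2" using rank_dmat_single[of n 0 "f 0 - 1"] rank_dmat_single[of n 1 "f 1 - 1"] by linarith
  finally have le: "V.rank (dmat n f - 1\<^sub>m n) \<le> 2" .
  have C: "dmat n f - 1\<^sub>m n \<in> carrier_mat n n" by (rule minus_carrier_mat) simp
  have ge: "2 \<le> V.rank (dmat n f - 1\<^sub>m n)"
    by (rule rank_ge2_minor[OF C, of 0 1 0 1]) (use n a in auto)
  show ?thesis unfolding codim_rank[OF dmat_carrier] using le ge by simp
qed

lemma pick_three:
  "pick {0,1,2::nat} 0 = 0" "pick {0,1,2::nat} 1 = 1" "pick {0,1,2::nat} 2 = 2"
proof -
  show p0: "pick {0,1,2::nat} 0 = 0" unfolding pick.simps by (intro Least_equality) auto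
  have "pick {0,1,2::nat} 1 = (LEAST a. a \<in> {0,1,2} \<and> a > pick {0,1,2::nat} 0)"
    using pick.simps(2)[of "{0,1,2}" 0] by simp
  also have "\<dots> = 1" unfolding p0 by (intro Least_equality) auto
  finally show p1: "pick {0,1,2::nat} 1 = 1" .
  have "pick {0,1,2::nat} 2 = (LEAST a. a \<in> {0,1,2} \<and> a > pick {0,1,2::nat} 1)"
    using pick.simps(2)[of "{0,1,2}" 1] by (simp add: numeral_2_eq_2)
  also have "\<dots> = 2" unfolding p1 by (intro Least_equality) auto
  finally show "pick {0,1,2::nat} 2 = 2" .
qed

lemma rank_ge3_diag:
  fixes A :: "complex mat"
  assumes A: "A \<in> carrier_mat n n" and n: "3 \<le> n"
    and D: "\<And>x y. x < n \<Longrightarrow> y < n \<Longrightarrow> x \<noteq> y \<Longrightarrow> A $$ (x,y) = 0"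
    and nz: "A $$ (0,0) \<noteq> 0" "A $$ (1,1) \<noteq> 0" "A $$ (2,2) \<noteq> 0"
  shows "3 \<le> vec_space.rank n A"
proof -
  interpret V: vec_space "TYPE(complex)" n .
  let ?I = "{0,1,2::nat}"
  have dA: "dim_row A = n" "dim_col A = n" using A by auto
  have c1: "{a. a < dim_row A \<and> a \<in> ?I} = ?I" "{a. a < dim_col A \<and> a \<in> ?I} = ?I"
    unfolding dA using n by auto
  have c2: "card ?I = 3" by simp
  have S: "submatrix A ?I ?I \<in> carrier_mat 3 3"
  proof (rule carrier_matI)
    show "dim_row (submatrix A ?I ?I) = 3" unfolding dim_submatrix(1) c1(1) c2 ..
    show "dim_col (submatrix A ?I ?I) = 3" unfolding dim_submatrix(2) c1(2) c2 ..
  qed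
  have e: "submatrix A ?I ?I $$ (a,b) = A $$ (pick ?I a, pick ?I b)" if "a < 3" "b < 3" for a b
    by (rule submatrix_index) (use that c1 c2 in simp_all)
  have pk: "pick ?I a = a" if "a < 3" for a
  proof -
    have "a = 0 \<or> a = 1 \<or> a = 2" using that by auto
    then show ?thesis using pick_three by auto
  qed
  have e2: "submatrix A ?I ?I $$ (a,b) = A $$ (a, b)" if "a < 3" "b < 3" for a b
    using e[OF that] pk that by simp
  have ut: "upper_triangular (submatrix A ?I ?I)"
    unfolding upper_triangular_def
  proof (intro allI impI)
    fix a b assume a: "a < dim_row (submatrix A ?I ?I)" and ba: "b < a"
    then have a3: "a < 3" using S by auto
    then show "submatrix A ?I ?I $$ (a,b) = 0" using e2[OF a3] ba D n by auto
  qed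
  have "det (submatrix A ?I ?I) = prod_list (diag_mat (submatrix A ?I ?I))"
    by (rule det_upper_triangular[OF ut S])
  also have "\<dots> = (\<Prod>t<3. submatrix A ?I ?I $$ (t,t))"
    unfolding diag_mat_def using S by (simp add: prod_diag_list)
  also have "\<dots> = (\<Prod>t<3. A $$ (t,t))" using e2 by simp
  also have "\<dots> = A $$ (0,0) * A $$ (1,1) * A $$ (2,2)"
  proof -
    have "{..<3::nat} = {0,1,2}" by auto
    then show ?thesis by (simp add: mult.assoc)
  qed
  finally have "det (submatrix A ?I ?I) \<noteq> 0" using nz by simp
  from V.rank_gt_minor[OF A this] show ?thesis using c1 c2 dA by simp
qed

lemma dmat_gb_codim:
  assumes n: "3 \<le> n" and h: "\<And>t. 3 \<le> t \<Longrightarrow> f t = 1" and a: "f 0 \<noteq> 1" "f 1 \<noteq> 1" "f 2 \<noteq> 1"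
  shows "codim n (dmat n f) = 3"
proof -
  interpret V: vec_space "TYPE(complex)" n .
  let ?E = "\<lambda>k. dmat n (\<lambda>t. if t = k then f k - 1 else 0)"
  have e: "dmat n f - 1\<^sub>m n = ?E 0 + ?E 1 + ?E 2"
    unfolding dmat_minus_one dmat_add
  proof (rule arg_cong[where f = "dmat n"], rule ext)
    fix t show "f t - 1 = (if t = 0 then f 0 - 1 else 0) + (if t = 1 then f 1 - 1 else 0) + (if t = 2 then f 2 - 1 else 0)"
      using h[of t] by (cases "t = 0"; cases "t = 1"; cases "t = 2") auto
  qed
  have "V.rank (dmat n f - 1\<^sub>m n) \<le> V.rank (?E 0 + ?E 1) + V.rank (?E 2)"
    unfolding e by (rule V.rank_subadditive[where nc = n]) (auto intro: add_carrier_mat)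
  also have "\<dots> \<le> V.rank (?E 0) + V.rank (?E 1) + V.rank (?E 2)"
    using V.rank_subadditive[of "?E 0" n "?E 1"] by simp
  also have "\<dots> \<le> 3" using rank_dmat_single[of n 0 "f 0 - 1"] rank_dmat_single[of n 1 "f 1 - 1"] rank_dmat_single[of n 2 "f 2 - 1"] by linarith
  finally have le: "V.rank (dmat n f - 1\<^sub>m n) \<le> 3" .
  have C: "dmat n f - 1\<^sub>m n \<in> carrier_mat n n" by (rule minus_carrier_mat) simp
  have ge: "3 \<le> V.rank (dmat n f - 1\<^sub>m n)"
    by (rule rank_ge3_diag[OF C n]) (use n a in auto)
  show ?thesis unfolding codim_rank[OF dmat_carrier] using le ge by simp
qed




lemma dmat_G:
  assumes "\<And>t. t < n \<Longrightarrow> f t \<noteq> 0 \<and> f t ^ m = 1"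
  shows "dmat n f \<in> Gm1n m n" "nz_prod n (dmat n f) = (\<Prod>t<n. f t)"
proof -
  have b: "bij_betw id {..<n} {..<n}" by simp
  have nz: "\<And>i j. i < n \<Longrightarrow> j < n \<Longrightarrow> dmat n f $$ (i,j) \<noteq> 0 \<longleftrightarrow> j = id i"
    using assms by auto
  note mp = mono_perm[OF dmat_carrier b nz]
  show "dmat n f \<in> Gm1n m n" unfolding Gm1n_def using mp(1) assms by auto
  have "(\<Prod>i<n. dmat n f $$ (i, id i)) = (\<Prod>t<n. f t)" by (rule prod.cong) auto
  then show "nz_prod n (dmat n f) = (\<Prod>t<n. f t)" using mp(2) by simp
qed

lemma tmat_G:
  assumes i: "i < n" and j: "j < n" and ij: "i \<noteq> j" and a: "a \<noteq> 0" and am: "a ^ m = 1"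
  shows "tmat n i j a \<in> Gm1n m n" "nz_prod n (tmat n i j a) = 1"
proof -
  let ?s = "Transposition.transpose i j"
  have "?s permutes {..<n}" by (rule permutes_swap_id) (use i j in auto)
  then have b: "bij_betw ?s {..<n} {..<n}" by (rule permutes_imp_bij)
  have nz: "tmat n i j a $$ (x,y) \<noteq> 0 \<longleftrightarrow> y = ?s x" if "x < n" "y < n" for x y
    using that a ij by (cases "x = i"; cases "x = j") (auto simp: transpose_def)
  note mp = mono_perm[OF tmat_carrier b nz]
  have ai: "inverse a ^ m = 1" using am by (simp add: power_inverse)
  show "tmat n i j a \<in> Gm1n m n" unfolding Gm1n_def using mp(1) am ai by auto
  have "(\<Prod>t<n. tmat n i j a $$ (t, ?s t)) = tmat n i j a $$ (i, ?s i) * tmat n i j a $$ (j, ?s j)"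
    by (rule prod_two[OF i j ij]) (use i j in \<open>auto simp: transpose_def\<close>)
  then have "nz_prod n (tmat n i j a) = tmat n i j a $$ (i, ?s i) * tmat n i j a $$ (j, ?s j)"
    using mp(2) by simp
  also have "\<dots> = 1" using i j ij a by simp
  finally show "nz_prod n (tmat n i j a) = 1" .
qed

lemma least_ne:
  fixes P :: "nat \<Rightarrow> bool"
  assumes "P k" "\<not> P c"
  shows "(LEAST k. P k) \<noteq> c"
  using LeastI[of P k, OF assms(1)] assms(2) by auto

lemma foldr_2: fixes r1 r2 :: "complex mat" assumes "r2 \<in> carrier_mat n n" shows "foldr (*) [r1, r2] (1\<^sub>m n) = r1 * r2"
  using right_mult_one_mat[OF assms] by simp
lemma foldr_3: fixes r1 r2 r3 :: "complex mat" assumes "r3 \<in> carrier_mat n n" shows "foldr (*) [r1, r2, r3] (1\<^sub>m n) = r1 * (r2 * r3)"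
  using right_mult_one_mat[OF assms] by simp

lemma refl_carrier: "r \<in> reflections n G \<Longrightarrow> r \<in> carrier_mat n n"
  unfolding reflections_def is_reflection_def by auto

theorem part_a:
  assumes p1: "1 < p" and pm: "p < m" and pd: "p dvd m" and n: "2 \<le> n"
  shows "\<exists>g\<in>Gmpn m p n. refl_length n (Gmpn m p n) g \<noteq> codim n g"
proof -
  have m0: "0 < m" using p1 pm by simp
  obtain z :: complex where zm: "z ^ m = 1" and zk: "\<And>k. 0 < k \<Longrightarrow> k < m \<Longrightarrow> z ^ k \<noteq> 1"
    using prim_root[OF m0] by blast
  have z0: "z \<noteq> 0" using zm m0 by (cases "z = 0") (auto simp: power_0_left)
  have zpow: "(z ^ k) ^ m = 1" for k
  proof -
    have "(z ^ k) ^ m = (z ^ m) ^ k" by (simp add: power_mult[symmetric] mult.commute)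
    then show ?thesis using zm by simp
  qed
  obtain q where q: "m = p * q" using pd by blast
  have mdp: "m div p = q" using q p1 by simp
  have zpq: "(z ^ p) ^ q = 1" using zm q by (simp add: power_mult)
  have q0a: "0 < q" using q m0 by (cases q) auto
  have "1 * q < p * q" by (rule mult_strict_right_mono[OF p1 q0a])
  then have q0: "0 < q" "q < m" using q q0a by auto
  define f where "f t = (if t = 0 then z else if t = 1 then z ^ (p - 1) else 1)" for t :: nat
  let ?g = "dmat n f"
  have fG: "\<And>t. t < n \<Longrightarrow> f t \<noteq> 0 \<and> f t ^ m = 1" unfolding f_def using z0 zm zpow by auto
  have n01: "0 < n" "1 < n" using n by auto
  have zp1: "z * z ^ (p - 1) = z ^ p" using p1 by (cases p) auto
  have "nz_prod n ?g = (\<Prod>t<n. f t)" by (rule dmat_G(2)[OF fG])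
  also have "\<dots> = f 0 * f 1" by (rule prod_two[OF n01]) (auto simp: f_def)
  also have "\<dots> = z ^ p" using zp1 by (simp add: f_def)
  finally have nzg: "nz_prod n ?g = z ^ p" .
  have gG: "?g \<in> Gmpn m p n" unfolding Gmpn_def using dmat_G(1)[OF fG] nzg mdp zpq by auto
  have z1: "z \<noteq> 1" using zk[of 1] pm p1 by simp
  have zp1ne: "z ^ (p - 1) \<noteq> 1" using zk[of "p - 1"] pm p1 by simp
  have zpne: "z ^ p \<noteq> 1" using zk[of p] pm p1 by simp
  have zqne: "z ^ q \<noteq> 1" using zk q0 by simp
  have codim: "codim n ?g = 2"
    by (rule dmat_ga_codim[OF n]) (use z1 zp1ne in \<open>auto simp: f_def\<close>)
  define P where "P k = (\<exists>rs. length rs = k \<and> set rs \<subseteq> reflections n (Gmpn m p n) \<and> foldr (*) rs (1\<^sub>m n) = ?g)" for k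
  let ?T1 = "tmat n 0 1 1" and ?T2 = "tmat n 0 1 z" and ?D = "dmat n (\<lambda>t. if t = 1 then z ^ p else 1)"
  have T1: "?T1 \<in> reflections n (Gmpn m p n)"
    unfolding reflections_def Gmpn_def using tmat_G[of 0 n 1 1 m] tmat_refl[of 0 n 1 1] n01 by simp
  have T2: "?T2 \<in> reflections n (Gmpn m p n)"
    unfolding reflections_def Gmpn_def using tmat_G[of 0 n 1 z m] tmat_refl[of 0 n 1 z] n01 z0 zm by simp
  have DG: "\<And>t. t < n \<Longrightarrow> (if t = 1 then z ^ p else 1) \<noteq> 0 \<and> (if t = 1 then z ^ p else 1) ^ m = 1"
    using z0 zpow by auto
  have "nz_prod n ?D = (\<Prod>t<n. (if t = 1 then z ^ p else 1))" by (rule dmat_G(2)[OF DG])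
  also have "\<dots> = (if (1::nat) = 1 then z ^ p else 1)" by (rule prod_one[OF n01(2)]) auto
  finally have nzD: "nz_prod n ?D = z ^ p" by simp
  have D: "?D \<in> reflections n (Gmpn m p n)"
    unfolding reflections_def Gmpn_def using dmat_G(1)[OF DG] nzD mdp zpq dmat_refl[of 1 n "z ^ p" m] n01 zpne m0 zpow[of p]
    by simp
  have zp1': "inverse z * z ^ p = z ^ (p - 1)"
  proof -
    have "inverse z * z ^ p = (inverse z * z) * z ^ (p - 1)" unfolding zp1[symmetric] by (simp add: mult.assoc)
    then show ?thesis using z0 by simp
  qed
  have prod: "?T1 * (?T2 * ?D) = ?g"
  proof -
    have "?T1 * (?T2 * ?D) = (?T1 * ?T2) * ?D"
      by (rule assoc_mult_mat[symmetric]) auto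
    also have "\<dots> = dmat n (\<lambda>t. (if t = 0 then z / 1 else if t = 1 then 1 / z else 1) * (if t = 1 then z ^ p else 1))"
      unfolding tmat_mult[OF n01 zero_neq_one] dmat_mult ..
    also have "\<dots> = ?g"
    proof (rule arg_cong[where f = "dmat n"], rule ext)
      fix t show "(if t = 0 then z / 1 else if t = 1 then 1 / z else 1) * (if t = 1 then z ^ p else 1) = f t"
        unfolding f_def using zp1' z0 by (cases "t = 0"; cases "t = 1") (auto simp: divide_inverse)
    qed
    finally show ?thesis .
  qed
  have P3: "P 3" unfolding P_def
    by (rule exI[of _ "[?T1, ?T2, ?D]"]) (use T1 T2 D prod in \<open>auto simp: numeral_3_eq_3\<close>)
  have nP2: "\<not> P 2"
  proof
    assume "P 2"
    then obtain rs where rs: "length rs = 2" "set rs \<subseteq> reflections n (Gmpn m p n)" "foldr (*) rs (1\<^sub>m n) = ?g"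
      unfolding P_def by blast
    then obtain r1 r2 where rs12: "rs = [r1, r2]"
      by (metis (no_types, lifting) One_nat_def Suc_length_conv length_0_conv numeral_2_eq_2)
    have R1: "r1 \<in> reflections n (Gmpn m p n)" and R2: "r2 \<in> reflections n (Gmpn m p n)"
      using rs(2) rs12 by auto
    have eq: "r1 * r2 = ?g" using rs(3) rs12 foldr_2[OF refl_carrier[OF R2]] by simp
    have gi: "\<And>t. t < n \<Longrightarrow> (r1 * r2) $$ (t,t) = f t" unfolding eq by simp
    show False
    proof (rule no2_a[of r1 m p n r2])
      show "r1 \<in> Gmpn m p n" "is_reflection n r1" "r2 \<in> Gmpn m p n" "is_reflection n r2"
        using R1 R2 unfolding reflections_def by auto
      show "2 \<le> n" by fact
      show "\<And>t. t < n \<Longrightarrow> (r1 * r2) $$ (t, t) \<noteq> 0" using gi fG by auto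
      show "\<And>t. t < n \<Longrightarrow> 2 \<le> t \<Longrightarrow> (r1 * r2) $$ (t, t) = 1" using gi unfolding f_def by auto
      show "(r1 * r2) $$ (0, 0) \<noteq> 1" "(r1 * r2) $$ (1, 1) \<noteq> 1" "(r1 * r2) $$ (0, 0) * (r1 * r2) $$ (1, 1) \<noteq> 1"
        using gi[OF n01(1)] gi[OF n01(2)] z1 zp1ne zpne zp1 unfolding f_def by auto
      show "((r1 * r2) $$ (0, 0)) ^ (m div p) \<noteq> 1" using gi[OF n01(1)] zqne mdp unfolding f_def by auto
    qed
  qed
  have rl: "refl_length n (Gmpn m p n) ?g \<noteq> 2"
    unfolding refl_length_def using least_ne[of P 3 2, OF P3 nP2] unfolding P_def .
  show ?thesis
  proof (rule bexI[of _ ?g])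
    show "refl_length n (Gmpn m p n) ?g \<noteq> codim n ?g" using rl codim by simp
  qed (rule gG)
qed




lemma prod_three:
  fixes f :: "nat \<Rightarrow> 'a::comm_monoid_mult"
  assumes "2 < n" "\<And>t. t < n \<Longrightarrow> 3 \<le> t \<Longrightarrow> f t = 1"
  shows "(\<Prod>t<n. f t) = f 0 * f 1 * f 2"
proof -
  have "(\<Prod>t<n. f t) = (\<Prod>t\<in>{0,1,2}. f t)"
    by (rule prod.mono_neutral_right) (use assms in auto)
  then show ?thesis by (simp add: mult.assoc)
qed

lemma det_dmat: "det (dmat n f) = (\<Prod>t<n. f t)"
proof -
  have ut: "upper_triangular (dmat n f)" unfolding upper_triangular_def by auto
  have "det (dmat n f) = prod_list (diag_mat (dmat n f))" by (rule det_upper_triangular[OF ut dmat_carrier])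
  also have "\<dots> = (\<Prod>t<n. dmat n f $$ (t,t))" unfolding diag_mat_def by (simp add: prod_diag_list)
  also have "\<dots> = (\<Prod>t<n. f t)" by (rule prod.cong) auto
  finally show ?thesis .
qed

lemma foldr_4: fixes r1 r2 r3 r4 :: "complex mat" assumes "r4 \<in> carrier_mat n n"
  shows "foldr (*) [r1, r2, r3, r4] (1\<^sub>m n) = r1 * (r2 * (r3 * r4))"
  using right_mult_one_mat[OF assms] by simp

theorem part_b:
  assumes m: "3 \<le> m" and n: "3 \<le> n"
  shows "\<exists>g\<in>Gmpn m m n. refl_length n (Gmpn m m n) g \<noteq> codim n g"
proof -
  have m0: "0 < m" using m by simp
  obtain z :: complex where zm: "z ^ m = 1" and zk: "\<And>k. 0 < k \<Longrightarrow> k < m \<Longrightarrow> z ^ k \<noteq> 1"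
    using prim_root[OF m0] by blast
  have z0: "z \<noteq> 0" using zm m0 by (cases "z = 0") (auto simp: power_0_left)
  have zpow: "(z ^ k) ^ m = 1" for k
  proof -
    have "(z ^ k) ^ m = (z ^ m) ^ k" by (simp add: power_mult[symmetric] mult.commute)
    then show ?thesis using zm by simp
  qed
  have mdm: "m div m = 1" using m0 by simp
  have z1: "z \<noteq> 1" using zk[of 1] m by simp
  have zm2ne: "z ^ (m - 2) \<noteq> 1" using zk[of "m - 2"] m by simp
  have zzz: "z * z * z ^ (m - 2) = 1"
  proof -
    have "z * z * z ^ (m - 2) = z ^ (m - 2 + 2)" by (simp add: power_add power2_eq_square mult.commute)
    also have "m - 2 + 2 = m" using m by simp
    finally show ?thesis using zm by simp
  qed
  have zinv: "inverse z * inverse z = z ^ (m - 2)"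
  proof -
    have "z ^ (m - 2) = inverse (z * z)" using zzz z0 by (simp add: field_simps)
    then show ?thesis by (simp add: inverse_mult_distrib)
  qed
  define f where "f t = (if t = 0 then z else if t = 1 then z else if t = 2 then z ^ (m - 2) else 1)" for t :: nat
  let ?g = "dmat n f"
  have fG: "\<And>t. t < n \<Longrightarrow> f t \<noteq> 0 \<and> f t ^ m = 1" unfolding f_def using z0 zm zpow by auto
  have n2: "0 < n" "1 < n" "2 < n" using n by auto
  have pf: "(\<Prod>t<n. f t) = 1"
  proof -
    have "(\<Prod>t<n. f t) = f 0 * f 1 * f 2" by (rule prod_three[OF n2(3)]) (auto simp: f_def)
    then show ?thesis using zzz by (simp add: f_def)
  qed
  have gG: "?g \<in> Gmpn m m n" unfolding Gmpn_def using dmat_G(1)[OF fG] dmat_G(2)[OF fG] pf mdm by simp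
  have detg: "det ?g = 1" unfolding det_dmat pf ..
  have codim: "codim n ?g = 3"
    by (rule dmat_gb_codim[OF n]) (use z1 zm2ne in \<open>auto simp: f_def\<close>)
  define P where "P k = (\<exists>rs. length rs = k \<and> set rs \<subseteq> reflections n (Gmpn m m n) \<and> foldr (*) rs (1\<^sub>m n) = ?g)" for k
  have TR: "tmat n i j a \<in> reflections n (Gmpn m m n)" if "i < n" "j < n" "i \<noteq> j" "a \<noteq> 0" "a ^ m = 1" for i j a
    unfolding reflections_def Gmpn_def using tmat_G[OF that] tmat_refl[OF that(1-4)] by simp
  let ?A = "tmat n 0 2 1" and ?B = "tmat n 0 2 z" and ?C = "tmat n 1 2 1" and ?D = "tmat n 1 2 z"
  have A: "?A \<in> reflections n (Gmpn m m n)" by (rule TR) (use n2 in auto)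
  have B: "?B \<in> reflections n (Gmpn m m n)" by (rule TR) (use n2 z0 zm in auto)
  have C: "?C \<in> reflections n (Gmpn m m n)" by (rule TR) (use n2 in auto)
  have D: "?D \<in> reflections n (Gmpn m m n)" by (rule TR) (use n2 z0 zm in auto)
  have prod: "?A * (?B * (?C * ?D)) = ?g"
  proof -
    have "?A * (?B * (?C * ?D)) = (?A * ?B) * (?C * ?D)"
      by (rule assoc_mult_mat[symmetric]) auto
    also have "\<dots> = dmat n (\<lambda>t. (if t = 0 then z / 1 else if t = 2 then 1 / z else 1) * (if t = 1 then z / 1 else if t = 2 then 1 / z else 1))"
    proof -
      have ne: "(0::nat) \<noteq> 2" "(1::nat) \<noteq> 2" by simp_all
      show ?thesis unfolding tmat_mult[OF n2(1) n2(3) ne(1)] tmat_mult[OF n2(2) n2(3) ne(2)] dmat_mult ..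
    qed
    also have "\<dots> = ?g"
    proof (rule arg_cong[where f = "dmat n"], rule ext)
      fix t show "(if t = 0 then z / 1 else if t = 2 then 1 / z else 1) * (if t = 1 then z / 1 else if t = 2 then 1 / z else 1) = f t"
        unfolding f_def using zinv by (cases "t = 0"; cases "t = 1"; cases "t = 2") (auto simp: divide_inverse)
    qed
    finally show ?thesis .
  qed
  have P4: "P 4" unfolding P_def
    by (rule exI[of _ "[?A, ?B, ?C, ?D]"]) (use A B C D prod foldr_4[of ?D n ?A ?B ?C] in \<open>auto simp: numeral_eq_Suc\<close>)
  have nP3: "\<not> P 3"
  proof
    assume "P 3"
    then obtain rs where rs: "length rs = 3" "set rs \<subseteq> reflections n (Gmpn m m n)" "foldr (*) rs (1\<^sub>m n) = ?g"
      unfolding P_def by blast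
    then obtain r1 r2 r3 where rs12: "rs = [r1, r2, r3]"
      by (auto simp: numeral_3_eq_3 length_Suc_conv)
    have R: "r \<in> Gmpn m m n" "is_reflection n r" "r \<in> carrier_mat n n" if "r \<in> {r1, r2, r3}" for r
      using rs(2) rs12 that unfolding reflections_def is_reflection_def by auto
    have eq: "r1 * (r2 * r3) = ?g" using rs(3) rs12 foldr_3[OF R(3)[of r3]] by simp
    have d: "det r = -1" if "r \<in> {r1, r2, r3}" for r by (rule refl_det_mm[OF R(1,2)[OF that] m0])
    have "det (r1 * (r2 * r3)) = det r1 * (det r2 * det r3)"
      using det_mult[OF R(3)[of r1] mult_carrier_mat[OF R(3)[of r2] R(3)[of r3]]] det_mult[OF R(3)[of r2] R(3)[of r3]] by simp
    also have "\<dots> = -1" using d by simp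
    finally show False using eq detg by simp
  qed
  have rl: "refl_length n (Gmpn m m n) ?g \<noteq> 3"
    unfolding refl_length_def using least_ne[of P 4 3, OF P4 nP3] unfolding P_def .
  show ?thesis
  proof (rule bexI[of _ ?g])
    show "refl_length n (Gmpn m m n) ?g \<noteq> codim n ?g" using rl codim by simp
  qed (rule gG)
qed

theorem mainTheorem8:
  shows "(\<forall>m p n. 1 < p \<and> p < m \<and> p dvd m \<and> 2 \<le> n \<longrightarrow>
            (\<exists>g\<in>Gmpn m p n. refl_length n (Gmpn m p n) g \<noteq> codim n g))
       \<and> (\<forall>m n. 3 \<le> m \<and> 3 \<le> n \<longrightarrow>
            (\<exists>g\<in>Gmpn m m n. refl_length n (Gmpn m m n) g \<noteq> codim n g))"
  using part_a part_b by blast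


end
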